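(* Let $\{a_n\}_{n\ge1}$ be the off-diagonal parameters of Example 5.1 (with $b_n=0$), and set $a_0=1$. For $x_0\in(-1,1)$ and $\theta_0\in\mathbb{R}$ let $u_n=u_n(x_0,\theta_0)$, $n\ge0$, be the solution of $a_nu_{n+1}-x_0u_n+a_{n-1}u_{n-1}=0$ ($n\ge1$) with $u_0=\cos\theta_0$, $u_1=\sin\theta_0$. Then for every compact $K\subset(-1,1)$ there is $C<\infty$ such that $|u_n(x_0,\theta_0)|\le C$ for all $x_0\in K$, all $\theta_0\in\mathbb{R}$ and all $n\ge0$.
   Context: Example 5.1: partition $\{1,2,\dots\}$ into successive consecutive blocks $A_1,B_1,C_1,D_1,A_2,B_2,\dots$ with $\#A_j=3^{j^2}$, $\#C_j=2^{j^2}$, $\#B_j=\#D_j=j^6-1$. $a_n=1$ for $n\in A_j$, $a_n=\tfrac12$ for $n\in C_j$; if $s$ is the last index of $A_j$ then $a_{s+i}=2^{-i/j^6}$ for $1\le i\le j^6-1$ (indices of $B_j$), and if $t$ is the last index of $C_j$ then $a_{t+i}=2^{-1+i/j^6}$ for $1\le i\le j^6-1$ (indices of $D_j$). *)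

theory Defs
  imports Complex_Main
begin

(* Example 5.1.  Block j (j >= 1) consists of A_j, B_j, C_j, D_j (in this order),
   with #A_j = 3^(j^2), #B_j = #D_j = j^6 - 1, #C_j = 2^(j^2). *)

definition blen :: "nat \<Rightarrow> nat" where
  "blen j = 3 ^ (j^2) + (j^6 - 1) + 2 ^ (j^2) + (j^6 - 1)"

(* first index of block j (j >= 1); indices start at 1 *)
definition bstart :: "nat \<Rightarrow> nat" where
  "bstart j = 1 + (\<Sum>i = 1..<j. blen i)"

definition blk :: "nat \<Rightarrow> nat" where
  "blk n = (LEAST j. n < bstart (Suc j))"

definition ex_a :: "nat \<Rightarrow> real" where
  "ex_a n =
    (if n = 0 then 1 else
     (let j = blk n; m = n - bstart j;
          nA = 3 ^ (j^2); nB = j^6 - 1; nC = 2 ^ (j^2) in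
      if m < nA then 1
      else if m < nA + nB then 2 powr (- real (m - nA + 1) / real (j^6))
      else if m < nA + nB + nC then 1/2
      else 2 powr (-1 + real (m - (nA + nB + nC) + 1) / real (j^6))))"

(* solution of a_n u_(n+1) - x u_n + a_(n-1) u_(n-1) = 0 (n >= 1),
   u_0 = cos \<theta>, u_1 = sin \<theta>  (a_n > 0, so this is the unique solution) *)
fun ex_u :: "real \<Rightarrow> real \<Rightarrow> nat \<Rightarrow> real" where
  "ex_u x \<theta> 0 = cos \<theta>"
| "ex_u x \<theta> (Suc 0) = sin \<theta>"
| "ex_u x \<theta> (Suc (Suc n)) =
     (x * ex_u x \<theta> (Suc n) - ex_a n * ex_u x \<theta> n) / ex_a (Suc n)"

end

theory Submission
  imports Defs "HOL-Analysis.Analysis"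
begin


definition Kf :: "real \<Rightarrow> real \<Rightarrow> real \<Rightarrow> real \<Rightarrow> real" where
  "Kf x a w1 w2 = a^2 * (w2^2 + w1^2) - x * a * w2 * w1"
definition Ef :: "real \<Rightarrow> real \<Rightarrow> real \<Rightarrow> real" where
  "Ef x a b = (b^2 - a^2) * a^2 / (4*a^2 - x^2)"
definition Lf :: "real \<Rightarrow> real \<Rightarrow> real \<Rightarrow> real \<Rightarrow> real \<Rightarrow> real" where
  "Lf x a b w1 w2 = Kf x a w1 w2 - Ef x a b * (w1^2 - w2^2)"
definition Lam :: "real \<Rightarrow> real \<Rightarrow> real \<Rightarrow> real \<Rightarrow> real \<Rightarrow> real" where
  "Lam x a b w1 w2 = Lf x a b w1 w2 / sqrt (4*a^2 - x^2)"

lemma K_id: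
  assumes "a1 * w2 = x*w1 - a0*w0"
  shows "Kf x a1 w1 w2 = Kf x a0 w0 w1 + (a1^2 - a0^2) * w1^2"
  using assms unfolding Kf_def by algebra

lemma frozen_id:
  assumes "a1 * w2 = x*w1 - a0*w0"
  shows "(4*a0^2 - x^2) * w1^2 = 2 * Kf x a0 w0 w1 + a0^2 * ((w1^2 - w2^2) - (w0^2 - w1^2))
     + ((a0-a1)*w2) * (2*x*w1 - 2*a0*w0 + (a0-a1)*w2)"
  using assms unfolding Kf_def by algebra

lemma L_id:
  assumes rec: "a1 * w2 = x*w1 - a0*w0" and P0: "4*a0^2 - x^2 \<noteq> 0"
  shows "Lf x a1 a2 w1 w2 = (1 + 2*(a1^2-a0^2)/(4*a0^2 - x^2)) * Lf x a0 a1 w0 w1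
     + (2*(a1^2-a0^2)/(4*a0^2 - x^2)) * Ef x a0 a1 * (w0^2 - w1^2)
     + (Ef x a0 a1 - Ef x a1 a2) * (w1^2 - w2^2)
     + ((a1^2-a0^2)/(4*a0^2 - x^2)) * (((a0-a1)*w2) * (2*x*w1 - 2*a0*w0 + (a0-a1)*w2))"
proof -
  define P where "P = 4*a0^2 - x^2"
  define \<delta> where "\<delta> = a1^2 - a0^2"
  define \<omega> where "\<omega> = ((a0-a1)*w2) * (2*x*w1 - 2*a0*w0 + (a0-a1)*w2)"
  have E1: "Ef x a0 a1 = \<delta> * a0^2 / P" by (simp add: Ef_def \<delta>_def P_def)
  have k: "Kf x a1 w1 w2 = Kf x a0 w0 w1 + \<delta> * w1^2" using K_id[OF rec] \<delta>_def by simp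
  have f: "P * w1^2 = 2 * Kf x a0 w0 w1 + a0^2 * ((w1^2 - w2^2) - (w0^2 - w1^2)) + \<omega>"
    using frozen_id[OF rec] P_def \<omega>_def by simp
  have "\<delta> * w1^2 = (\<delta>/P) * (P * w1^2)" using P0 P_def by simp
  also have "\<dots> = (\<delta>/P) * (2 * Kf x a0 w0 w1 + a0^2 * ((w1^2 - w2^2) - (w0^2 - w1^2)) + \<omega>)"
    using f by simp
  finally have dw: "\<delta> * w1^2 = 2*(\<delta>/P) * Kf x a0 w0 w1 + Ef x a0 a1 * ((w1^2 - w2^2) - (w0^2 - w1^2)) + (\<delta>/P) * \<omega>"
    unfolding E1 by (simp add: algebra_simps)
  show ?thesis
    unfolding Lf_def k dw P_def[symmetric] \<delta>_def[symmetric] \<omega>_def[symmetric]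
    by (simp add: algebra_simps diff_divide_distrib add_divide_distrib)
qed

lemma Edif_gen:
  fixes A B C X P Q :: real
  assumes "P \<noteq> 0" "Q \<noteq> 0" "P = 4*A - X" "Q = 4*B - X"
  shows "(B-A)*A/P - (C-B)*B/Q = ((B-A)-(C-B))*(A/P) + (C-B)*(X*(B-A)/(P*Q))"
proof -
  have "(B-A)*A/P - (C-B)*B/Q - (((B-A)-(C-B))*(A/P) + (C-B)*(X*(B-A)/(P*Q)))
      = (C-B)*(A*Q - B*P - X*(B-A))/(P*Q)"
    using assms(1,2) by (simp add: field_simps)
  also have "A*Q - B*P - X*(B-A) = 0" by (simp add: assms(3,4) algebra_simps)
  finally show ?thesis by simp
qed

lemma sigma_ineq:
  fixes s :: real assumes "s \<ge> 1/2"
  shows "(1 + s^2)/2 \<le> s * (1 + (s^2 - 1)^2)"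
proof -
  have "(s+1)^2 \<ge> (3/2)^2" using assms by (intro power_mono) auto
  hence "s*(s+1)^2 \<ge> (1/2)*(3/2)^2" using assms by (intro mult_mono) auto
  hence h: "s*(s+1)^2 - 1/2 \<ge> 0" by (simp add: power2_eq_square)
  have "s * (1 + (s^2 - 1)^2) - (1 + s^2)/2 = (s-1)^2 * (s*(s+1)^2 - 1/2)"
    by (simp add: power2_eq_square algebra_simps)
  also have "\<dots> \<ge> 0" using h by simp
  finally show ?thesis by simp
qed

lemma step_lemma:
  fixes r x a0 a1 a2 w0 w1 w2 :: real
  assumes r0: "0 \<le> r" and r1: "r < 1" and xr: "\<bar>x\<bar> \<le> r"
    and a0: "1/2 \<le> a0" "a0 \<le> 1" and a1: "1/2 \<le> a1" "a1 \<le> 1" and a2: "1/2 \<le> a2" "a2 \<le> 1"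
    and rec: "a1*w2 = x*w1 - a0*w0"
    and sm: "\<bar>a1 - a0\<bar> \<le> (1-r^2)*(1-r)/16"
  shows "(1-r)/16 * (w1^2 + w0^2) \<le> Lam x a0 a1 w0 w1"
    and "Lam x a1 a2 w1 w2 \<le> (1 + 208/((1-r^2)^3*((1-r)/4)) *
          ((a1-a0)^2 + \<bar>a1-a0\<bar>*\<bar>a2-a1\<bar> + \<bar>(a1^2-a0^2)-(a2^2-a1^2)\<bar>)) * Lam x a0 a1 w0 w1"
proof -
  define p where "p = 1 - r^2"
  define \<kappa> where "\<kappa> = (1-r)/4"
  define h1 where "h1 = a1 - a0"
  define h2 where "h2 = a2 - a1"
  define d1 where "d1 = a1^2 - a0^2"
  define d2 where "d2 = a2^2 - a1^2"
  define P0 where "P0 = 4*a0^2 - x^2"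
  define P1 where "P1 = 4*a1^2 - x^2"
  define Z0 where "Z0 = w1^2 + w0^2"
  define m where "m = \<bar>w1\<bar> + \<bar>w0\<bar>"
  define q where "q = (a1-a0)^2 + \<bar>a1-a0\<bar>*\<bar>a2-a1\<bar> + \<bar>(a1^2-a0^2)-(a2^2-a1^2)\<bar>"
  define E1 where "E1 = Ef x a0 a1"
  define E2 where "E2 = Ef x a1 a2"
  define y where "y = 4*d1/P0"
  define \<omega> where "\<omega> = ((a0-a1)*w2) * (2*x*w1 - 2*a0*w0 + (a0-a1)*w2)"
  define L0 where "L0 = Lf x a0 a1 w0 w1"
  define L1 where "L1 = Lf x a1 a2 w1 w2"
  have p0: "p > 0" "p \<le> 1" using r0 r1 mult_left_mono[of r 1 r] by (auto simp: p_def power2_eq_square)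
  have k0: "\<kappa> > 0" "\<kappa> \<le> 1/4" using r0 r1 by (auto simp: \<kappa>_def)
  have x2: "x^2 \<le> r^2" using xr by (metis abs_ge_zero power2_abs power_mono)
  have sq0: "a0^2 \<ge> 1/4" "a0^2 \<le> 1" using a0 power_mono[of "1/2" a0 2] power_mono[of a0 1 2] by (auto simp: power2_eq_square)
  have sq1: "a1^2 \<ge> 1/4" "a1^2 \<le> 1" using a1 power_mono[of "1/2" a1 2] power_mono[of a1 1 2] by (auto simp: power2_eq_square)
  have xx0: "x^2 \<ge> 0" by simp
  have P0b: "P0 \<ge> p" "P0 \<le> 4" unfolding P0_def p_def using x2 sq0 xx0 by linarith+
  have P1b: "P1 \<ge> p" "P1 \<le> 4" unfolding P1_def p_def using x2 sq1 xx0 by linarith+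
  have P0p: "P0 > 0" using P0b p0 by linarith
  have P1p: "P1 > 0" using P1b p0 by linarith
  have x1: "\<bar>x\<bar> \<le> 1" using xr r1 by linarith
  have x21: "x^2 \<le> 1" using x2 p0 unfolding p_def by linarith
  have hs: "\<bar>h1\<bar> \<le> p*\<kappa>/4" using sm by (simp add: h1_def p_def \<kappa>_def)
  have pk: "p*\<kappa> \<le> 1/4" using p0 k0 mult_mono[of p 1 \<kappa> "1/4"] by simp
  have hs2: "\<bar>h1\<bar> \<le> 1/16" using hs pk by linarith
  have d1b: "\<bar>d1\<bar> \<le> 2*\<bar>h1\<bar>"
  proof -
    have "d1 = (a1+a0)*h1" by (simp add: d1_def h1_def power2_eq_square algebra_simps)
    hence "\<bar>d1\<bar> = (a1+a0)*\<bar>h1\<bar>" using a0 a1 by (simp add: abs_mult)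
    also have "\<dots> \<le> 2*\<bar>h1\<bar>" using a0 a1 by (intro mult_right_mono) auto
    finally show ?thesis .
  qed
  have d2b: "\<bar>d2\<bar> \<le> 2*\<bar>h2\<bar>"
  proof -
    have "d2 = (a2+a1)*h2" by (simp add: d2_def h2_def power2_eq_square algebra_simps)
    hence "\<bar>d2\<bar> = (a2+a1)*\<bar>h2\<bar>" using a1 a2 by (simp add: abs_mult)
    also have "\<dots> \<le> 2*\<bar>h2\<bar>" using a1 a2 by (intro mult_right_mono) auto
    finally show ?thesis .
  qed
  have m2: "m^2 \<le> 2*Z0" unfolding m_def Z0_def
    using sum_squares_ge_zero[of "\<bar>w1\<bar> - \<bar>w0\<bar>" 0]
    by (simp add: power2_eq_square algebra_simps abs_mult_self)
  have m0: "m \<ge> 0" "Z0 \<ge> 0" by (auto simp: m_def Z0_def)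
  have w2b: "\<bar>w2\<bar> \<le> 2*m"
  proof -
    have "a1*\<bar>w2\<bar> = \<bar>a1*w2\<bar>" using a1 by (simp add: abs_mult)
    also have "\<dots> = \<bar>x*w1 - a0*w0\<bar>" using rec by simp
    also have "\<dots> \<le> \<bar>x\<bar>*\<bar>w1\<bar> + a0*\<bar>w0\<bar>" using a0 by (simp add: abs_mult abs_triangle_ineq4 order_trans[OF abs_triangle_ineq4])
    also have "\<dots> \<le> 1*\<bar>w1\<bar> + 1*\<bar>w0\<bar>" using x1 a0 by (intro add_mono mult_right_mono) auto
    finally have "a1*\<bar>w2\<bar> \<le> m" by (simp add: m_def)
    moreover have "(1/2)*\<bar>w2\<bar> \<le> a1*\<bar>w2\<bar>" using a1 by (intro mult_right_mono) auto
    ultimately show ?thesis by linarith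
  qed
  have w22: "w2^2 \<le> 8*Z0"
  proof -
    have "w2^2 = \<bar>w2\<bar>^2" by simp
    also have "\<dots> \<le> (2*m)^2" using w2b by (intro power_mono) auto
    also have "\<dots> \<le> 8*Z0" using m2 by (simp add: power_mult_distrib)
    finally show ?thesis .
  qed
  have D0b: "\<bar>w0^2 - w1^2\<bar> \<le> Z0" by (simp add: Z0_def abs_le_iff)
  have D1b: "\<bar>w1^2 - w2^2\<bar> \<le> 9*Z0"
  proof -
    have "w0^2 \<ge> 0" "w1^2 \<ge> 0" "w2^2 \<ge> 0" by simp_all
    moreover have "\<And>A B C::real. 0\<le>A \<Longrightarrow> 0\<le>B \<Longrightarrow> 0\<le>C \<Longrightarrow> C \<le> 8*(B+A) \<Longrightarrow> \<bar>B - C\<bar> \<le> 9*(B+A)"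
      by (simp add: abs_le_iff)
    ultimately show ?thesis using w22 unfolding Z0_def by blast
  qed
  have omb: "\<bar>\<omega>\<bar> \<le> 12*\<bar>h1\<bar>*Z0"
  proof -
    have e1: "\<bar>(a0-a1)*w2\<bar> \<le> \<bar>h1\<bar>*(2*m)"
    proof -
      have hh: "\<bar>a0-a1\<bar> = \<bar>h1\<bar>" by (simp add: h1_def abs_minus_commute)
      show ?thesis unfolding abs_mult hh by (intro mult_left_mono w2b) auto
    qed
    have "\<bar>(a0-a1)*w2\<bar> \<le> m" using e1 hs2 m0 mult_right_mono[of "\<bar>h1\<bar>" "1/2" "2*m"] by linarith
    moreover have "\<bar>2*x*w1 - 2*a0*w0\<bar> \<le> 2*m"
    proof -
      have "\<bar>2*x*w1 - 2*a0*w0\<bar> \<le> \<bar>2*x*w1\<bar> + \<bar>2*a0*w0\<bar>" by (rule abs_triangle_ineq4)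
      also have "\<dots> = 2*\<bar>x\<bar>*\<bar>w1\<bar> + 2*a0*\<bar>w0\<bar>" using a0 by (simp add: abs_mult)
      also have "\<dots> \<le> 2*1*\<bar>w1\<bar> + 2*1*\<bar>w0\<bar>" using x1 a0 by (intro add_mono mult_right_mono mult_left_mono) auto
      finally show ?thesis by (simp add: m_def)
    qed
    ultimately have e2: "\<bar>2*x*w1 - 2*a0*w0 + (a0-a1)*w2\<bar> \<le> 3*m" by linarith
    have "\<bar>\<omega>\<bar> = \<bar>(a0-a1)*w2\<bar> * \<bar>2*x*w1 - 2*a0*w0 + (a0-a1)*w2\<bar>" by (simp add: \<omega>_def abs_mult)
    also have "\<dots> \<le> (\<bar>h1\<bar>*(2*m)) * (3*m)" using e1 e2 by (intro mult_mono) auto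
    also have "\<dots> = 6*\<bar>h1\<bar>*m^2" by (simp add: power2_eq_square)
    also have "\<dots> \<le> 6*\<bar>h1\<bar>*(2*Z0)" using m2 by (intro mult_left_mono) auto
    finally show ?thesis by simp
  qed
  have a0sq: "a0^2 \<le> 1" using a0 power_mono[of a0 1 2] by simp
  have a1sq: "a1^2 \<le> 1" using a1 power_mono[of a1 1 2] by simp
  have E1b: "\<bar>E1\<bar> \<le> 2*\<bar>h1\<bar>/p"
  proof -
    have "\<bar>E1\<bar> = \<bar>d1\<bar> * a0^2 / P0" using P0p by (simp add: E1_def Ef_def d1_def P0_def abs_mult)
    also have "\<dots> \<le> (2*\<bar>h1\<bar>) * 1 / p" using d1b a0sq P0b p0
      by (intro frac_le mult_mono) auto
    finally show ?thesis by simp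
  qed
  have yb: "\<bar>y\<bar> \<le> 8*\<bar>h1\<bar>/p"
  proof -
    have "\<bar>y\<bar> = 4*\<bar>d1\<bar>/P0" using P0p by (simp add: y_def abs_mult)
    also have "\<dots> \<le> 4*(2*\<bar>h1\<bar>)/p" using d1b P0b p0 by (intro frac_le) auto
    finally show ?thesis by simp
  qed
  have dPb: "\<bar>d1/P0\<bar> \<le> 2*\<bar>h1\<bar>/p"
    using d1b P0b p0 P0p by (simp add: abs_divide) (intro frac_le, auto)
  have Edif: "E1 - E2 = (d1 - d2)*(a0^2/P0) + d2*(x^2*d1/(P0*P1))"
    unfolding E1_def E2_def Ef_def d1_def d2_def P0_def[symmetric] P1_def[symmetric]
    by (rule Edif_gen) (use P0p P1p in \<open>auto simp: P0_def P1_def\<close>)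
  have E12b: "\<bar>E1 - E2\<bar> \<le> \<bar>d1-d2\<bar>/p + 4*\<bar>h1\<bar>*\<bar>h2\<bar>/p^2"
  proof -
    have t1: "\<bar>(d1 - d2)*(a0^2/P0)\<bar> \<le> \<bar>d1-d2\<bar>/p"
    proof -
      have "a0^2/P0 \<le> 1/p" using a0sq P0b p0 by (intro frac_le) auto
      moreover have "\<bar>(d1 - d2)*(a0^2/P0)\<bar> = \<bar>d1-d2\<bar>*(a0^2/P0)" using P0p by (simp add: abs_mult)
      ultimately have "\<bar>(d1 - d2)*(a0^2/P0)\<bar> \<le> \<bar>d1-d2\<bar>*(1/p)"
        by (metis abs_ge_zero mult_left_mono)
      thus ?thesis by simp
    qed
    have t2: "\<bar>d2*(x^2*d1/(P0*P1))\<bar> \<le> 4*\<bar>h1\<bar>*\<bar>h2\<bar>/p^2"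
    proof -
      have "\<bar>d2*(x^2*d1/(P0*P1))\<bar> = \<bar>d2\<bar>*(x^2*\<bar>d1\<bar>)/(P0*P1)" using P0p P1p
        by (simp add: abs_mult abs_divide)
      also have "\<dots> \<le> (2*\<bar>h2\<bar>)*(1*(2*\<bar>h1\<bar>))/(p*p)" using d1b d2b x21 P0b P1b p0
        by (intro frac_le mult_mono) auto
      finally show ?thesis by (simp add: power2_eq_square mult.commute mult.left_commute)
    qed
    show ?thesis unfolding Edif using t1 t2 abs_triangle_ineq[of "(d1 - d2)*(a0^2/P0)" "d2*(x^2*d1/(P0*P1))"] by linarith
  qed
  define err where "err = (2*d1/P0) * E1 * (w0^2 - w1^2) + (E1 - E2) * (w1^2 - w2^2) + (d1/P0) * \<omega>"
  have Lid: "L1 = (1 + 2*d1/P0) * L0 + err"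
    unfolding L1_def L0_def err_def E1_def E2_def d1_def P0_def \<omega>_def
    using L_id[OF rec] P0p P0_def by simp
  have errb: "\<bar>err\<bar> \<le> 36*q*Z0/p^2"
  proof -
    define H where "H = \<bar>h1\<bar>"
    define G where "G = \<bar>h2\<bar>"
    define Dd where "Dd = \<bar>d1-d2\<bar>"
    have H0: "H \<ge> 0" "G \<ge> 0" "Dd \<ge> 0" by (auto simp: H_def G_def Dd_def)
    have s1: "\<bar>(2*d1/P0) * E1 * (w0^2 - w1^2)\<bar> \<le> (4*H/p)*(2*H/p)*Z0"
    proof -
      have "\<bar>2*d1/P0\<bar> \<le> 4*H/p" using dPb by (simp add: abs_mult H_def)
      thus ?thesis unfolding abs_mult using E1b D0b p0 H0 by (intro mult_mono) (auto simp: H_def)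
    qed
    have s2: "\<bar>(E1 - E2) * (w1^2 - w2^2)\<bar> \<le> (Dd/p + 4*H*G/p^2)*(9*Z0)"
      unfolding abs_mult using E12b D1b p0 H0 by (intro mult_mono) (auto simp: H_def G_def Dd_def)
    have s3: "\<bar>(d1/P0) * \<omega>\<bar> \<le> (2*H/p)*(12*H*Z0)"
      unfolding abs_mult using dPb omb p0 H0 by (intro mult_mono) (auto simp: H_def)
    have "\<bar>err\<bar> \<le> (4*H/p)*(2*H/p)*Z0 + (Dd/p + 4*H*G/p^2)*(9*Z0) + (2*H/p)*(12*H*Z0)"
      unfolding err_def using s1 s2 s3 abs_triangle_ineq[of "(2*d1/P0) * E1 * (w0^2 - w1^2) + (E1 - E2) * (w1^2 - w2^2)" "(d1/P0) * \<omega>"] abs_triangle_ineq[of "(2*d1/P0) * E1 * (w0^2 - w1^2)" "(E1 - E2) * (w1^2 - w2^2)"] by linarith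
    also have "\<dots> = (8*H^2 + 36*(H*G) + 9*(p*Dd) + 24*(p*H^2))*Z0/p^2"
      using p0 by (simp add: field_simps power2_eq_square)
    also have "\<dots> \<le> (36*q)*Z0/p^2"
    proof -
      have "24*(p*H^2) \<le> 24*H^2" using p0 mult_right_mono[of p 1 "H^2"] by simp
      moreover have "9*(p*Dd) \<le> 9*Dd" using p0 H0 mult_right_mono[of p 1 Dd] by simp
      moreover have "q = H^2 + H*G + Dd" by (simp add: q_def H_def G_def Dd_def h1_def h2_def d1_def d2_def)
      moreover have "H^2 \<ge> 0" "H*G \<ge> 0" using H0 by auto
      ultimately have "8*H^2 + 36*(H*G) + 9*(p*Dd) + 24*(p*H^2) \<le> 36*q" using H0 by linarith
      thus ?thesis using m0 p0 by (intro divide_right_mono mult_right_mono) auto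
    qed
    finally show ?thesis by simp
  qed
  have K0b: "Kf x a0 w0 w1 \<ge> \<kappa>*Z0"
  proof -
    have "\<bar>x*a0*w1*w0\<bar> \<le> r*a0*(Z0/2)"
    proof -
      have "\<bar>w1*w0\<bar> \<le> Z0/2" unfolding Z0_def using sum_squares_ge_zero[of "\<bar>w1\<bar> - \<bar>w0\<bar>" 0]
        by (simp add: abs_mult power2_eq_square algebra_simps abs_mult_self)
      moreover have "\<bar>x*a0\<bar> \<le> r*a0" using xr a0 by (simp add: abs_mult)
      ultimately have "\<bar>x*a0\<bar>*\<bar>w1*w0\<bar> \<le> (r*a0)*(Z0/2)" by (intro mult_mono) auto
      thus ?thesis by (simp add: abs_mult mult.assoc)
    qed
    hence "Kf x a0 w0 w1 \<ge> a0^2*Z0 - r*a0*(Z0/2)" unfolding Kf_def Z0_def by (simp add: abs_le_iff algebra_simps)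
    moreover have "a0^2*Z0 - r*a0*(Z0/2) = a0*(a0 - r/2)*Z0" by (simp add: power2_eq_square algebra_simps)
    moreover have "a0*(a0 - r/2) \<ge> (1/2)*((1-r)/2)" using a0 r1 by (intro mult_mono) auto
    ultimately show ?thesis using m0 mult_right_mono[of "(1/2)*((1-r)/2)" "a0*(a0 - r/2)" Z0] by (simp add: \<kappa>_def)
  qed
  have E1k: "\<bar>E1\<bar> \<le> \<kappa>/2"
  proof -
    have "2*\<bar>h1\<bar> \<le> 2*(p*\<kappa>/4)" using hs by linarith
    hence "2*\<bar>h1\<bar>/p \<le> 2*(p*\<kappa>/4)/p" using p0 by (intro divide_right_mono) auto
    thus ?thesis using E1b p0 by simp
  qed
  have L0b: "L0 \<ge> \<kappa>/2*Z0"
  proof -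
    have "\<bar>E1 * (w0^2 - w1^2)\<bar> \<le> (\<kappa>/2)*Z0" unfolding abs_mult using E1k D0b by (intro mult_mono) auto
    thus ?thesis using K0b unfolding L0_def Lf_def E1_def[symmetric] by (simp add: abs_le_iff)
  qed
  have sP0: "sqrt P0 \<le> 2" "sqrt P0 > 0" using P0b P0p real_sqrt_le_mono[of P0 4] by auto
  have Lam0: "Lam x a0 a1 w0 w1 = L0 / sqrt P0" by (simp add: Lam_def L0_def P0_def)
  have Lam1: "Lam x a1 a2 w1 w2 = L1 / sqrt P1" by (simp add: Lam_def L1_def P1_def)
  have L0nn: "L0 \<ge> 0" using L0b mult_nonneg_nonneg[of "\<kappa>/2" Z0] k0 m0 by linarith
  have Lam0b: "Lam x a0 a1 w0 w1 \<ge> \<kappa>/4*Z0"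
  proof -
    have "L0/2 \<le> L0/sqrt P0" using sP0 L0nn by (intro divide_left_mono) auto
    thus ?thesis using L0b Lam0 by simp
  qed
  show "(1-r)/16 * (w1^2 + w0^2) \<le> Lam x a0 a1 w0 w1" using Lam0b by (simp add: \<kappa>_def Z0_def)
  define \<sigma> where "\<sigma> = sqrt P1 / sqrt P0"
  have P1eq: "P1 = P0*(1+y)" using P0p by (simp add: P1_def P0_def y_def d1_def field_simps)
  have s2: "\<sigma>^2 = 1 + y" using P0p P1p P1eq by (simp add: \<sigma>_def power_divide)
  have ysm: "\<bar>y\<bar> \<le> 1/2"
  proof -
    have "8*\<bar>h1\<bar> \<le> 8*(p*\<kappa>/4)" using hs by linarith
    hence "8*\<bar>h1\<bar>/p \<le> 8*(p*\<kappa>/4)/p" using p0 by (intro divide_right_mono) auto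
    thus ?thesis using yb p0 k0 by simp
  qed
  have sg: "\<sigma> \<ge> 1/2"
  proof (rule ccontr)
    assume "\<not> \<sigma> \<ge> 1/2"
    moreover have "\<sigma> \<ge> 0" using P0p P1p by (simp add: \<sigma>_def)
    ultimately have "\<sigma>^2 < (1/2)^2" by (intro power_strict_mono) auto
    thus False using s2 ysm by (simp add: power2_eq_square abs_le_iff)
  qed
  have si: "1 + 2*d1/P0 \<le> \<sigma>*(1+y^2)"
    using sigma_ineq[OF sg] s2 by (simp add: y_def)
  have L1b: "L1 \<le> \<sigma>*(1+y^2)*L0 + \<bar>err\<bar>"
    using Lid si L0nn mult_right_mono[OF si L0nn] by linarith
  have sP1: "sqrt P1 \<ge> p" "sqrt P1 > 0"
  proof -
    have "p*p \<le> 1*p" using p0 by (intro mult_right_mono) auto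
    hence "sqrt (p^2) \<le> sqrt P1" using P1b by (intro real_sqrt_le_mono) (auto simp: power2_eq_square)
    thus "sqrt P1 \<ge> p" using p0 by simp
    show "sqrt P1 > 0" using P1p by simp
  qed
  have Z0b: "Z0 \<le> 4/\<kappa> * Lam x a0 a1 w0 w1" using Lam0b k0 by (simp add: field_simps)
  have "Lam x a1 a2 w1 w2 \<le> (\<sigma>*(1+y^2)*L0 + \<bar>err\<bar>)/sqrt P1"
    using L1b sP1 Lam1 by (simp add: divide_right_mono)
  also have "\<dots> = (1+y^2)*Lam x a0 a1 w0 w1 + \<bar>err\<bar>/sqrt P1"
    using sP0 sP1 Lam0 by (simp add: \<sigma>_def add_divide_distrib)
  also have "\<dots> \<le> (1+y^2)*Lam x a0 a1 w0 w1 + \<bar>err\<bar>/p"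
    using sP1 p0 by (simp add: divide_left_mono)
  also have "\<dots> \<le> (1 + 208/(p^3*\<kappa>)*q) * Lam x a0 a1 w0 w1"
  proof -
    have Lnn: "Lam x a0 a1 w0 w1 \<ge> 0" using Lam0b mult_nonneg_nonneg[of "\<kappa>/4" Z0] k0 m0 by linarith
    have q0: "q \<ge> 0" by (simp add: q_def)
    have pk3: "p^3*\<kappa> \<le> p^2" using p0 k0 by (simp add: power3_eq_cube power2_eq_square mult_le_one)
    have pk3p: "p^3*\<kappa> > 0" using p0 k0 by simp
    have hq: "h1^2 \<le> q" by (simp add: q_def h1_def)
    have "y^2 \<le> (8*\<bar>h1\<bar>/p)^2" using yb by (metis abs_ge_zero power2_abs power_mono)
    also have "\<dots> = 64*h1^2/p^2" by (simp add: power_divide power_mult_distrib)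
    also have "\<dots> \<le> 64*q/(p^3*\<kappa>)" using hq q0 pk3 pk3p p0 by (intro frac_le) auto
    finally have yq: "y^2 \<le> 64*q/(p^3*\<kappa>)" .
    have "\<bar>err\<bar>/p \<le> (36*q*Z0/p^2)/p" using errb p0 by (intro divide_right_mono) auto
    also have "\<dots> \<le> (36*q*(4/\<kappa> * Lam x a0 a1 w0 w1)/p^2)/p" using Z0b q0 p0
      by (intro divide_right_mono mult_left_mono) auto
    also have "\<dots> = 144*q/(p^3*\<kappa>) * Lam x a0 a1 w0 w1" using p0 k0 by (simp add: field_simps power3_eq_cube power2_eq_square)
    finally have eq: "\<bar>err\<bar>/p \<le> 144*q/(p^3*\<kappa>) * Lam x a0 a1 w0 w1" .
    have "(1+y^2)*Lam x a0 a1 w0 w1 \<le> (1 + 64*q/(p^3*\<kappa>))*Lam x a0 a1 w0 w1"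
      using yq Lnn by (intro mult_right_mono) auto
    with eq have "(1+y^2)*Lam x a0 a1 w0 w1 + \<bar>err\<bar>/p \<le> (1 + 64*q/(p^3*\<kappa>))*Lam x a0 a1 w0 w1 + 144*q/(p^3*\<kappa>) * Lam x a0 a1 w0 w1" by linarith
    also have "\<dots> = (1 + 208/(p^3*\<kappa>)*q) * Lam x a0 a1 w0 w1" by (simp add: algebra_simps add_divide_distrib)
    finally show ?thesis .
  qed
  finally show "Lam x a1 a2 w1 w2 \<le> (1 + 208/((1-r^2)^3*((1-r)/4)) *
          ((a1-a0)^2 + \<bar>a1-a0\<bar>*\<bar>a2-a1\<bar> + \<bar>(a1^2-a0^2)-(a2^2-a1^2)\<bar>)) * Lam x a0 a1 w0 w1"
    by (simp add: p_def \<kappa>_def q_def)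
qed


lemma growth:
  fixes x a0 a1 w0 w1 w2 :: real
  assumes "\<bar>x\<bar> \<le> 1" "1/2 \<le> a0" "a0 \<le> 1" "1/2 \<le> a1" "a1 \<le> 1" and rec: "a1*w2 = x*w1 - a0*w0"
  shows "w2^2 + w1^2 \<le> 9*(w1^2 + w0^2)"
proof -
  have "a1*\<bar>w2\<bar> = \<bar>a1*w2\<bar>" using assms(4) by (simp add: abs_mult)
  also have "\<dots> = \<bar>x*w1 - a0*w0\<bar>" using rec by simp
  also have "\<dots> \<le> \<bar>x*w1\<bar> + \<bar>a0*w0\<bar>" by (rule abs_triangle_ineq4)
  also have "\<dots> = \<bar>x\<bar>*\<bar>w1\<bar> + a0*\<bar>w0\<bar>" using assms by (simp add: abs_mult)
  also have "\<dots> \<le> 1*\<bar>w1\<bar> + 1*\<bar>w0\<bar>" using assms by (intro add_mono mult_right_mono) auto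
  finally have "a1*\<bar>w2\<bar> \<le> \<bar>w1\<bar> + \<bar>w0\<bar>" by simp
  moreover have "(1/2)*\<bar>w2\<bar> \<le> a1*\<bar>w2\<bar>" using assms by (intro mult_right_mono) auto
  ultimately have "(1/2)*\<bar>w2\<bar> \<le> \<bar>w1\<bar> + \<bar>w0\<bar>" by linarith
  hence b: "\<bar>w2\<bar> \<le> 2*(\<bar>w1\<bar> + \<bar>w0\<bar>)" by simp
  have "w2^2 = \<bar>w2\<bar>^2" by simp
  also have "\<dots> \<le> (2*(\<bar>w1\<bar> + \<bar>w0\<bar>))^2" using b by (intro power_mono) auto
  also have "\<dots> \<le> 8*(w1^2 + w0^2)"
    using sum_squares_ge_zero[of "\<bar>w1\<bar> - \<bar>w0\<bar>" 0]
    by (simp add: power2_eq_square algebra_simps abs_mult_self)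
  finally have c: "w2^2 \<le> 8*(w1^2 + w0^2)" .
  have l: "\<And>A B C::real. C \<le> 8*(B+A) \<Longrightarrow> 0 \<le> A \<Longrightarrow> C + B \<le> 9*(B+A)" by (simp add: algebra_simps)
  show ?thesis by (rule l[OF c]) simp
qed

lemma Lam_upper:
  fixes r x a0 a1 w0 w1 :: real
  assumes r0: "0 \<le> r" and r1: "r < 1" and xr: "\<bar>x\<bar> \<le> r"
    and a0: "1/2 \<le> a0" "a0 \<le> 1" and a1: "1/2 \<le> a1" "a1 \<le> 1"
  shows "Lam x a0 a1 w0 w1 \<le> 3*(w1^2 + w0^2)/(1-r^2)^2"
proof -
  define p where "p = 1 - r^2"
  define Z where "Z = w1^2 + w0^2"
  define P0 where "P0 = 4*a0^2 - x^2"
  have p0: "p > 0" "p \<le> 1" using r0 r1 mult_left_mono[of r 1 r] by (auto simp: p_def power2_eq_square)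
  have x2: "x^2 \<le> r^2" using xr by (metis abs_ge_zero power2_abs power_mono)
  have sq0: "a0^2 \<ge> 1/4" "a0^2 \<le> 1" using a0 power_mono[of "1/2" a0 2] power_mono[of a0 1 2] by (auto simp: power2_eq_square)
  have sq1: "a1^2 \<ge> 1/4" "a1^2 \<le> 1" using a1 power_mono[of "1/2" a1 2] power_mono[of a1 1 2] by (auto simp: power2_eq_square)
  have xx0: "x^2 \<ge> 0" by simp
  have P0b: "P0 \<ge> p" unfolding P0_def p_def using x2 sq0 xx0 by linarith
  have P0p: "P0 > 0" using P0b p0 by linarith
  have Z0: "Z \<ge> 0" by (simp add: Z_def)
  have x1: "\<bar>x\<bar> \<le> 1" using xr r1 by linarith
  have Kb: "\<bar>Kf x a0 w0 w1\<bar> \<le> 2*Z"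
  proof -
    have "2*\<bar>w1*w0\<bar> \<le> Z" unfolding Z_def using sum_squares_ge_zero[of "\<bar>w1\<bar> - \<bar>w0\<bar>" 0]
        by (simp add: abs_mult power2_eq_square algebra_simps abs_mult_self)
    hence "\<bar>w1*w0\<bar> \<le> Z" using abs_ge_zero[of "w1*w0"] by linarith
    moreover have "\<bar>x*a0\<bar> \<le> 1" using x1 a0 by (simp add: abs_mult mult_le_one)
    ultimately have "\<bar>x*a0\<bar>*\<bar>w1*w0\<bar> \<le> 1*Z" by (intro mult_mono) auto
    hence t: "\<bar>x*a0*w1*w0\<bar> \<le> Z" by (simp add: abs_mult mult.assoc)
    have "a0^2*Z \<le> 1*Z" using sq0 Z0 by (intro mult_right_mono) auto
    moreover have "a0^2*Z \<ge> 0" using Z0 by simp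
    ultimately have "a0^2*Z - x*a0*w1*w0 \<le> 2*Z" "-(a0^2*Z - x*a0*w1*w0) \<le> 2*Z" using t unfolding abs_le_iff by linarith+
    thus ?thesis unfolding Kf_def Z_def[symmetric] abs_le_iff by simp
  qed
  have Eb: "\<bar>Ef x a0 a1\<bar> \<le> 1/p"
  proof -
    have "\<bar>Ef x a0 a1\<bar> = \<bar>a1^2 - a0^2\<bar> * a0^2 / P0" using P0p by (simp add: Ef_def P0_def abs_mult)
    also have "\<dots> \<le> 1*1/p" using sq0 sq1 P0b p0 by (intro frac_le mult_mono) (auto simp: abs_le_iff)
    finally show ?thesis by simp
  qed
  have Db: "\<bar>w0^2 - w1^2\<bar> \<le> Z" by (simp add: Z_def abs_le_iff)
  have "\<bar>Ef x a0 a1 * (w0^2 - w1^2)\<bar> \<le> (1/p)*Z" unfolding abs_mult using Eb Db p0 by (intro mult_mono) auto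
  hence Lb: "\<bar>Lf x a0 a1 w0 w1\<bar> \<le> 2*Z + Z/p" using Kb abs_triangle_ineq4[of "Kf x a0 w0 w1" "Ef x a0 a1 * (w0^2 - w1^2)"] unfolding Lf_def
    by simp
  have "2*Z + Z/p \<le> 3*Z/p"
  proof -
    have "2*Z*p \<le> 2*Z*1" using p0 Z0 by (intro mult_left_mono) auto
    hence "2*Z \<le> 2*Z/p" using p0 by (simp add: le_divide_eq)
    thus ?thesis by (simp add: add_divide_distrib)
  qed
  with Lb have Lb2: "\<bar>Lf x a0 a1 w0 w1\<bar> \<le> 3*Z/p" by linarith
  have sP: "sqrt P0 \<ge> p"
  proof -
    have "p*p \<le> 1*p" using p0 by (intro mult_right_mono) auto
    hence "sqrt (p^2) \<le> sqrt P0" using P0b by (intro real_sqrt_le_mono) (auto simp: power2_eq_square)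
    thus ?thesis using p0 by simp
  qed
  have "Lam x a0 a1 w0 w1 \<le> \<bar>Lf x a0 a1 w0 w1\<bar> / sqrt P0" unfolding Lam_def P0_def[symmetric]
    using P0p by (simp add: divide_right_mono)
  also have "\<dots> \<le> (3*Z/p)/p" using Lb2 sP p0 by (intro frac_le) auto
  finally show ?thesis by (simp add: p_def Z_def power2_eq_square)
qed


lemma abs_le_one_plus_sq: "\<bar>t::real\<bar> \<le> 1 + t^2"
proof -
  have "(\<bar>t\<bar> - 1)^2 \<ge> 0" by simp
  hence "2*\<bar>t\<bar> \<le> 1 + t^2" by (simp add: power2_eq_square algebra_simps abs_mult_self)
  thus ?thesis by simp
qed

lemma general_bound:
  fixes a :: "nat \<Rightarrow> real" and r :: real
  assumes r0: "0 \<le> r" and r1: "r < 1"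
    and ab: "\<And>n. 1/2 \<le> a n \<and> a n \<le> 1"
    and qs: "summable (\<lambda>n. (a (n+1) - a n)^2 + \<bar>a (n+1) - a n\<bar>*\<bar>a (n+2) - a (n+1)\<bar>
                 + \<bar>(a (n+1)^2 - a n^2) - (a (n+2)^2 - a (n+1)^2)\<bar>)"
    and ht: "(\<lambda>n. a (n+1) - a n) \<longlonglongrightarrow> 0"
  shows "\<exists>C. \<forall>x u. \<bar>x\<bar> \<le> r \<longrightarrow> (\<forall>n. a (n+1) * u (n+2) = x * u (n+1) - a n * u n)
            \<longrightarrow> (u 0)^2 + (u 1)^2 = 1 \<longrightarrow> (\<forall>n. \<bar>u n\<bar> \<le> C)"
proof -
  define q where "q = (\<lambda>n. (a (n+1) - a n)^2 + \<bar>a (n+1) - a n\<bar>*\<bar>a (n+2) - a (n+1)\<bar>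
                 + \<bar>(a (n+1)^2 - a n^2) - (a (n+2)^2 - a (n+1)^2)\<bar>)"
  have q0: "\<And>n. q n \<ge> 0" by (simp add: q_def)
  have qsum: "summable q" using qs by (simp add: q_def)
  define \<epsilon> where "\<epsilon> = (1-r^2)*(1-r)/16"
  have p0: "1 - r^2 > 0" using r0 r1 mult_left_mono[of r 1 r] by (auto simp: power2_eq_square)
  have e0: "\<epsilon> > 0" using p0 r1 by (simp add: \<epsilon>_def)
  obtain N0 where N0: "\<And>n. n \<ge> N0 \<Longrightarrow> \<bar>a (n+1) - a n\<bar> < \<epsilon>"
    using LIMSEQ_D[OF ht e0] by auto
  define S where "S = suminf q"
  define Cst where "Cst = 208/((1-r^2)^3*((1-r)/4))"
  have C0: "Cst \<ge> 0" using p0 r1 by (simp add: Cst_def)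
  define B where "B = 1 + 9^N0 + 16/(1-r) * (3*9^N0/(1-r^2)^2) * exp (Cst*S)"
  show ?thesis
  proof (intro exI allI impI)
    fix x :: real and u :: "nat \<Rightarrow> real" and n :: nat
    assume xr: "\<bar>x\<bar> \<le> r" and rec: "\<forall>n. a (n+1) * u (n+2) = x * u (n+1) - a n * u n"
      and init: "(u 0)^2 + (u 1)^2 = 1"
    have x1: "\<bar>x\<bar> \<le> 1" using xr r1 by linarith
    define Z where "Z = (\<lambda>n. u (n+1)^2 + u n^2)"
    have Zg: "Z m \<le> 9^m" for m
    proof (induction m)
      case 0 thus ?case using init by (simp add: Z_def add.commute)
    next
      case (Suc m)
      have "Z (Suc m) \<le> 9 * Z m" unfolding Z_def
        using growth[OF x1 _ _ _ _ rec[rule_format, of m]] ab[of m] ab[of "m+1"] by (simp add: add.commute)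
      also have "\<dots> \<le> 9 * 9^m" using Suc by simp
      finally show ?case by simp
    qed
    define \<Lambda> where "\<Lambda> = (\<lambda>n. Lam x (a n) (a (n+1)) (u n) (u (n+1)))"
    have hh: "1/2 \<le> a m" "a m \<le> 1" "1/2 \<le> a (m+1)" "a (m+1) \<le> 1" "1/2 \<le> a (m+2)" "a (m+2) \<le> 1" for m
      using ab[of m] ab[of "m+1"] ab[of "m+2"] by auto
    have smm: "\<bar>a (m+1) - a m\<bar> \<le> (1-r^2)*(1-r)/16" if "m \<ge> N0" for m
      using N0[OF that] by (simp add: \<epsilon>_def)
    have lowb: "(1-r)/16 * Z m \<le> \<Lambda> m" if "m \<ge> N0" for m
      using step_lemma(1)[OF r0 r1 xr hh[of m] rec[rule_format, of m] smm[OF that]]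
      unfolding \<Lambda>_def Z_def by (simp add: add.commute)
    have stepb: "\<Lambda> (m+1) \<le> (1 + Cst * q m) * \<Lambda> m" if "m \<ge> N0" for m
      using step_lemma(2)[OF r0 r1 xr hh[of m] rec[rule_format, of m] smm[OF that]]
      unfolding \<Lambda>_def Cst_def q_def by (simp add: numeral_2_eq_2 add.commute)
    have Lnn: "\<Lambda> m \<ge> 0" if "m \<ge> N0" for m
    proof -
      have "(1-r)/16 * Z m \<ge> 0" using r1 by (simp add: Z_def)
      thus ?thesis using lowb[OF that] by linarith
    qed
    have iter: "\<Lambda> (N0+k) \<le> \<Lambda> N0 * exp (Cst * sum q {N0..<N0+k})" for k
    proof (induction k)
      case 0 thus ?case by simp
    next
      case (Suc k)
      have "\<Lambda> (N0 + Suc k) \<le> (1 + Cst * q (N0+k)) * \<Lambda> (N0+k)"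
        using stepb[of "N0+k"] by simp
      also have "\<dots> \<le> exp (Cst * q (N0+k)) * \<Lambda> (N0+k)"
        using Lnn[of "N0+k"] by (intro mult_right_mono) auto
      also have "\<dots> \<le> exp (Cst * q (N0+k)) * (\<Lambda> N0 * exp (Cst * sum q {N0..<N0+k}))"
        using Suc by (intro mult_left_mono) auto
      also have "\<dots> = \<Lambda> N0 * exp (Cst * sum q {N0..<N0+Suc k})"
        by (simp add: exp_add[symmetric] algebra_simps)
      finally show ?case .
    qed
    have LN0: "\<Lambda> N0 \<le> 3*9^N0/(1-r^2)^2"
    proof -
      have "\<Lambda> N0 \<le> 3*Z N0/(1-r^2)^2"
        using Lam_upper[OF r0 r1 xr] ab[of N0] ab[of "N0+1"] unfolding \<Lambda>_def Z_def by simp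
      also have "\<dots> \<le> 3*9^N0/(1-r^2)^2" using Zg[of N0] p0 by (intro divide_right_mono) auto
      finally show ?thesis .
    qed
    have Zb: "Z n \<le> B"
    proof (cases "n \<ge> N0")
      case True
      then obtain k where k: "n = N0 + k" using le_Suc_ex by blast
      have sS: "sum q {N0..<N0+k} \<le> S" unfolding S_def using qsum q0 by (intro sum_le_suminf) auto
      have "(1-r)/16 * Z n \<le> \<Lambda> n" using lowb True by simp
      also have "\<dots> \<le> \<Lambda> N0 * exp (Cst * sum q {N0..<N0+k})" using iter k by simp
      also have "\<dots> \<le> (3*9^N0/(1-r^2)^2) * exp (Cst * S)"
        using LN0 Lnn[of N0] sS C0 by (intro mult_mono) (auto intro: mult_left_mono)
      finally have "(1-r)/16 * Z n \<le> (3*9^N0/(1-r^2)^2) * exp (Cst * S)" .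
      hence "16/(1-r) * ((1-r)/16 * Z n) \<le> 16/(1-r) * ((3*9^N0/(1-r^2)^2) * exp (Cst * S))" using r1
        by (intro mult_left_mono) auto
      moreover have "16/(1-r) * ((1-r)/16 * Z n) = Z n" using r1 by simp
      ultimately have "Z n \<le> 16/(1-r) * ((3*9^N0/(1-r^2)^2) * exp (Cst * S))" by simp
      moreover have "(9::real)^N0 \<ge> 0" by simp
      ultimately show ?thesis unfolding B_def by (simp only: mult.assoc)
    next
      case False
      hence "(9::real)^n \<le> 9^N0" by (intro power_increasing) auto
      hence "Z n \<le> 9^N0" using Zg[of n] by linarith
      moreover have "16/(1-r) * (3*9^N0/(1-r^2)^2) * exp (Cst*S) \<ge> 0" using r1 by simp
      ultimately show ?thesis unfolding B_def by linarith
    qed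
    have "\<bar>u n\<bar> \<le> 1 + (u n)^2" by (rule abs_le_one_plus_sq)
    also have "\<dots> \<le> 1 + Z n" by (simp add: Z_def)
    also have "\<dots> \<le> 1 + B" using Zb by simp
    finally show "\<bar>u n\<bar> \<le> 1 + B" .
  qed
qed



lemma blen_pos: "blen j \<ge> 2"
proof -
  have "(3::nat)^(j^2) \<ge> 1" "(2::nat)^(j^2) \<ge> 1" by simp_all
  thus ?thesis unfolding blen_def by linarith
qed

lemma bstart_Suc: "j \<ge> 1 \<Longrightarrow> bstart (Suc j) = bstart j + blen j"
  unfolding bstart_def by simp

lemma bstart_mono: "1 \<le> i \<Longrightarrow> i \<le> k \<Longrightarrow> bstart i \<le> bstart k"
  unfolding bstart_def by (intro add_left_mono sum_mono2) auto

lemma bstart_ge: "bstart j \<ge> j"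
proof (induction j)
  case 0 thus ?case by simp
next
  case (Suc j)
  show ?case
  proof (cases "j = 0")
    case True thus ?thesis by (simp add: bstart_def)
  next
    case False
    thus ?thesis using Suc bstart_Suc[of j] blen_pos[of j] by simp
  qed
qed

lemma blk_props:
  assumes "n \<ge> 1"
  shows "blk n \<ge> 1" "bstart (blk n) \<le> n" "n < bstart (Suc (blk n))"
proof -
  have ex: "n < bstart (Suc n)" using bstart_ge[of "Suc n"] by simp
  show lt: "n < bstart (Suc (blk n))" unfolding blk_def by (rule LeastI[of _ n]) (rule ex)
  show b1: "blk n \<ge> 1"
  proof (rule ccontr)
    assume "\<not> blk n \<ge> 1" hence "blk n = 0" by simp
    with lt assms show False by (simp add: bstart_def)
  qed
  then obtain j where j: "blk n = Suc j" by (cases "blk n") auto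
  have "\<not> n < bstart (Suc j)"
  proof
    assume "n < bstart (Suc j)"
    hence "blk n \<le> j" unfolding blk_def by (rule Least_le)
    with j show False by simp
  qed
  thus "bstart (blk n) \<le> n" using j by simp
qed

lemma blk_eq:
  assumes j: "j \<ge> 1" and n: "bstart j \<le> n" "n < bstart (Suc j)"
  shows "blk n = j"
  unfolding blk_def
proof (rule Least_equality)
  show "n < bstart (Suc j)" by fact
next
  fix i assume i: "n < bstart (Suc i)"
  show "j \<le> i"
  proof (rule ccontr)
    assume "\<not> j \<le> i"
    hence "Suc i \<le> j" by simp
    hence "bstart (Suc i) \<le> bstart j" by (intro bstart_mono) auto
    with i n show False by simp
  qed
qed


definition EEg :: "nat \<Rightarrow> nat \<Rightarrow> nat \<Rightarrow> nat \<Rightarrow> real" where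
  "EEg nA N nC m = (if m < nA then 0 else if m < nA + (N-1) then real (m - nA + 1) / real N
     else if m < nA + (N-1) + nC then 1
     else max 0 (1 - real (m - (nA + (N-1) + nC) + 1) / real N))"

definition ex_e :: "nat \<Rightarrow> real" where
  "ex_e n = (if n = 0 then 0 else
     EEg (3^(blk n ^2)) (blk n ^6) (2^(blk n ^2)) (n - bstart (blk n)))"

lemma EEg_range: "N \<ge> 1 \<Longrightarrow> 0 \<le> EEg nA N nC m \<and> EEg nA N nC m \<le> 1"
  unfolding EEg_def by (auto simp: field_simps)

lemma ex_e_range: "0 \<le> ex_e n \<and> ex_e n \<le> 1"
proof (cases "n = 0")
  case True thus ?thesis by (simp add: ex_e_def)
next
  case False
  hence "blk n \<ge> 1" using blk_props(1)[of n] by simp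
  hence "blk n ^ 6 \<ge> 1" by simp
  thus ?thesis using False EEg_range by (simp add: ex_e_def)
qed

lemma ex_a_exp: "ex_a n = exp (- ln 2 * ex_e n)"
proof (cases "n = 0")
  case True thus ?thesis by (simp add: ex_a_def ex_e_def)
next
  case False
  define j where "j = blk n"
  define m where "m = n - bstart j"
  define nA where "nA = (3::nat)^(j^2)"
  define N where "N = j^6"
  define nC where "nC = (2::nat)^(j^2)"
  have j1: "j \<ge> 1" using blk_props(1)[of n] False by (simp add: j_def)
  have N1: "N \<ge> 1" using j1 by (simp add: N_def)
  have mb: "m < nA + (N-1) + nC + (N-1)"
    using blk_props(2,3)[of n] False bstart_Suc[OF j1] unfolding m_def j_def[symmetric]
    by (simp add: blen_def nA_def N_def nC_def)
  have ea: "ex_a n = (if m < nA then 1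
      else if m < nA + (N-1) then 2 powr (- real (m - nA + 1) / real N)
      else if m < nA + (N-1) + nC then 1/2
      else 2 powr (-1 + real (m - (nA + (N-1) + nC) + 1) / real N))"
    using False unfolding ex_a_def Let_def j_def[symmetric] m_def[symmetric] nA_def[symmetric]
      N_def[symmetric] nC_def[symmetric] by simp
  have ee: "ex_e n = EEg nA N nC m" using False
    unfolding ex_e_def j_def[symmetric] m_def[symmetric] nA_def[symmetric] N_def[symmetric] nC_def[symmetric] by simp
  have p2: "\<And>y. (2::real) powr y = exp (y * ln 2)" by (simp add: powr_def)
  have gg: "\<And>t c::real. (-1 + t) * c = - c * (1 - t)" by (simp add: algebra_simps)
  show ?thesis
  proof -
    consider "m < nA" | "\<not> m < nA" "m < nA + (N-1)" | "\<not> m < nA + (N-1)" "m < nA + (N-1) + nC"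
      | "\<not> m < nA + (N-1) + nC" by blast
    thus ?thesis
    proof cases
      case 1 thus ?thesis unfolding ea ee EEg_def by simp
    next
      case 2
      have "ex_a n = 2 powr (- real (m - nA + 1) / real N)" by (simp only: ea if_not_P[OF 2(1)] if_P[OF 2(2)])
      moreover have "ex_e n = real (m - nA + 1) / real N" by (simp only: ee EEg_def if_not_P[OF 2(1)] if_P[OF 2(2)])
      moreover have "(- real (m - nA + 1) / real N) * ln 2 = - ln 2 * (real (m - nA + 1) / real N)"
        by (simp add: algebra_simps)
      ultimately show ?thesis unfolding p2 by metis
    next
      case 3 thus ?thesis unfolding ea ee EEg_def by (simp add: exp_minus)
    next
      case 4
      have "real (m - (nA + (N-1) + nC) + 1) \<le> real N" using mb 4 by simp
      hence "1 - real (m - (nA + (N-1) + nC) + 1) / real N \<ge> 0" using N1 by (simp add: field_simps)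
      hence "max 0 (1 - real (m - (nA + (N-1) + nC) + 1) / real N) = 1 - real (m - (nA + (N-1) + nC) + 1) / real N"
        by simp
      have c1: "\<not> m < nA" "\<not> m < nA + (N-1)" "\<not> m < nA + (N-1) + nC" using 4 by auto
      from \<open>max _ _ = _\<close> have "ex_e n = 1 - real (m - (nA + (N-1) + nC) + 1) / real N"
        by (simp only: ee EEg_def if_not_P[OF c1(1)] if_not_P[OF c1(2)] if_not_P[OF c1(3)])
      moreover have "ex_a n = 2 powr (-1 + real (m - (nA + (N-1) + nC) + 1) / real N)"
        by (simp only: ea if_not_P[OF c1(1)] if_not_P[OF c1(2)] if_not_P[OF c1(3)])
      moreover have "(-1 + real (m - (nA + (N-1) + nC) + 1) / real N) * ln 2 = - ln 2 * (1 - real (m - (nA + (N-1) + nC) + 1) / real N)"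
        by (rule gg)
      ultimately show ?thesis unfolding p2 by metis
    qed
  qed
qed


definition epsg :: "nat \<Rightarrow> nat \<Rightarrow> nat \<Rightarrow> nat \<Rightarrow> real" where
  "epsg nA N nC m = (if nA - 1 \<le> m \<and> m < nA + N - 1 then 1 / real N
     else if nA + (N-1) + nC - 1 \<le> m \<and> m < nA + (N-1) + nC + N - 1 then - 1 / real N else 0)"

lemma EEg_A: "m < nA \<Longrightarrow> EEg nA N nC m = 0" by (simp add: EEg_def)
lemma EEg_B: "nA \<le> m \<Longrightarrow> m < nA + (N-1) \<Longrightarrow> EEg nA N nC m = (real m - real nA + 1) / real N"
proof -
  assume a: "nA \<le> m" "m < nA + (N-1)"
  hence "EEg nA N nC m = real (m - nA + 1) / real N" unfolding EEg_def by (simp only: if_False if_True if_not_P if_P not_less) 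
  thus ?thesis using a by (simp add: of_nat_diff)
qed
lemma EEg_C: "nA + (N-1) \<le> m \<Longrightarrow> m < nA + (N-1) + nC \<Longrightarrow> EEg nA N nC m = 1"
proof -
  assume a: "nA + (N-1) \<le> m" "m < nA + (N-1) + nC"
  hence "\<not> m < nA" "\<not> m < nA + (N-1)" by auto
  thus ?thesis unfolding EEg_def using a(2) by (simp only: if_False if_True if_not_P if_P)
qed
lemma EEg_D: "N \<ge> 1 \<Longrightarrow> nA + (N-1) + nC \<le> m \<Longrightarrow> m \<le> nA + (N-1) + nC + (N - 1) \<Longrightarrow>
   EEg nA N nC m = 1 - (real m - real (nA + (N-1) + nC) + 1) / real N"
proof -
  assume N: "N \<ge> 1" and m: "nA + (N-1) + nC \<le> m" "m \<le> nA + (N-1) + nC + (N - 1)"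
  have r: "real (m - (nA + (N-1) + nC) + 1) = real m - real (nA + (N-1) + nC) + 1" using m by (simp add: of_nat_diff)
  have "m - (nA + (N-1) + nC) + 1 \<le> N" using m N by linarith
  hence "real (m - (nA + (N-1) + nC) + 1) \<le> real N" by linarith
  hence "1 - real (m - (nA + (N-1) + nC) + 1) / real N \<ge> 0" using N by (simp add: field_simps)
  moreover have "\<not> m < nA" "\<not> m < nA + (N-1)" "\<not> m < nA + (N-1) + nC" using m by auto
  ultimately show ?thesis unfolding EEg_def r[symmetric] by (simp only: if_False if_True if_not_P max_absorb2)
qed
lemma EEg_E: "N \<ge> 1 \<Longrightarrow> nA + (N-1) + nC + N \<le> m \<Longrightarrow> EEg nA N nC m = 0"
proof -
  assume N: "N \<ge> 1" and m: "nA + (N-1) + nC + N \<le> m"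
  have "m - (nA + (N-1) + nC) + 1 \<ge> N" using m N by linarith
  hence "real (m - (nA + (N-1) + nC) + 1) \<ge> real N" by linarith
  hence "1 - real (m - (nA + (N-1) + nC) + 1) / real N \<le> 0" using N by (simp add: field_simps)
  moreover have "\<not> m < nA" "\<not> m < nA + (N-1)" "\<not> m < nA + (N-1) + nC" using m by auto
  ultimately show ?thesis unfolding EEg_def by (simp only: if_False if_True if_not_P max_absorb1)
qed

lemma epsg_1: "nA - 1 \<le> m \<Longrightarrow> m < nA + N - 1 \<Longrightarrow> epsg nA N nC m = 1 / real N"
  unfolding epsg_def by (simp only: if_P conj_absorb)
lemma epsg_2: "\<not> (nA - 1 \<le> m \<and> m < nA + N - 1) \<Longrightarrow> nA + (N-1) + nC - 1 \<le> m \<Longrightarrow> m < nA + (N-1) + nC + N - 1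
   \<Longrightarrow> epsg nA N nC m = - 1 / real N"
  unfolding epsg_def by (simp only: if_False if_True if_not_P) simp
lemma epsg_0: "\<not> (nA - 1 \<le> m \<and> m < nA + N - 1) \<Longrightarrow> \<not> (nA + (N-1) + nC - 1 \<le> m \<and> m < nA + (N-1) + nC + N - 1)
   \<Longrightarrow> epsg nA N nC m = 0"
  unfolding epsg_def by (simp only: if_False if_True if_not_P)

lemma eps_formula:
  assumes nA: "nA \<ge> 2" and N: "N \<ge> 1" and nC: "nC \<ge> 1" and m: "m \<le> nA + (N-1) + nC + (N-1)"
  shows "EEg nA N nC (m+1) - EEg nA N nC m = epsg nA N nC m"
proof -
  define M2 where "M2 = nA + (N-1) + nC"
  have Nr: "real N > 0" using N by simp
  consider (a) "m + 1 < nA" | (b) "m + 1 = nA" | (c) "nA \<le> m" "m + 1 < nA + (N-1)"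
    | (d) "nA \<le> m" "m + 1 = nA + (N-1)" | (e) "nA + (N-1) \<le> m" "m + 1 < M2"
    | (f) "nA + (N-1) \<le> m" "m + 1 = M2" | (g) "M2 \<le> m" "m + 1 \<le> M2 + (N - 1)" | (h) "m = M2 + (N - 1)"
    using m N nC unfolding M2_def by linarith
  thus ?thesis
  proof cases
    case a
    have "epsg nA N nC m = 0" using a N nC unfolding M2_def by (intro epsg_0) linarith+
    thus ?thesis using a by (simp add: EEg_A)
  next
    case b
    have e0: "EEg nA N nC m = 0" using b by (intro EEg_A) linarith
    have e1: "EEg nA N nC (m+1) = 1 / real N"
    proof (cases "N = 1")
      case True
      hence "EEg nA N nC (m+1) = 1" using b nC by (intro EEg_C) linarith+
      thus ?thesis using True by simp
    next
      case False
      hence "EEg nA N nC (m+1) = (real (m+1) - real nA + 1) / real N" using b N by (intro EEg_B) linarith+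
      thus ?thesis using b by simp
    qed
    have "epsg nA N nC m = 1 / real N" using b N by (intro epsg_1) linarith+
    thus ?thesis using e0 e1 by simp
  next
    case c
    have "EEg nA N nC (m+1) - EEg nA N nC m = (real (m+1) - real nA + 1) / real N - (real m - real nA + 1) / real N"
      using c EEg_B[of nA "m+1" N nC] EEg_B[of nA m N nC] by simp
    also have "\<dots> = 1 / real N" by (simp add: diff_divide_distrib[symmetric])
    finally show ?thesis using c N by (subst epsg_1) linarith+
  next
    case d
    have "EEg nA N nC (m+1) = 1" using d nC by (intro EEg_C) linarith+
    moreover have "EEg nA N nC m = (real m - real nA + 1) / real N" using d by (intro EEg_B) linarith+
    moreover have "real m - real nA + 1 = real N - 1" using d N by linarith
    moreover have "epsg nA N nC m = 1 / real N" using d N by (intro epsg_1) linarith+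
    moreover have "1 - (real N - 1) / real N = 1 / real N" using Nr by (simp add: field_simps)
    ultimately show ?thesis by simp
  next
    case e
    have "EEg nA N nC (m+1) = 1" "EEg nA N nC m = 1" using e unfolding M2_def by (intro EEg_C; linarith)+
    moreover have "epsg nA N nC m = 0" using e N nA unfolding M2_def by (intro epsg_0) linarith+
    ultimately show ?thesis by simp
  next
    case f
    have "EEg nA N nC m = 1" using f unfolding M2_def by (intro EEg_C) linarith+
    moreover have "EEg nA N nC (m+1) = 1 - (real (m+1) - real M2 + 1) / real N"
      using f N unfolding M2_def by (intro EEg_D) linarith+
    moreover have "real (m+1) - real M2 + 1 = 1" using f by simp
    moreover have "epsg nA N nC m = - 1 / real N" using f N nC unfolding M2_def by (intro epsg_2) linarith+
    ultimately show ?thesis by simp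
  next
    case g
    have "EEg nA N nC (m+1) - EEg nA N nC m = (1 - (real (m+1) - real M2 + 1) / real N) - (1 - (real m - real M2 + 1) / real N)"
      using g N EEg_D[of N nA nC "m+1"] EEg_D[of N nA nC m] unfolding M2_def by simp
    also have "\<dots> = - 1 / real N" by (simp add: diff_divide_distrib[symmetric])
    finally show ?thesis using g N nC nA unfolding M2_def by (subst epsg_2) linarith+
  next
    case h
    have "EEg nA N nC m = 1 - (real m - real M2 + 1) / real N" using h N unfolding M2_def by (intro EEg_D) linarith+
    also have "\<dots> = 0" using h N Nr by (simp add: of_nat_diff)
    finally have "EEg nA N nC m = 0" .
    moreover have "EEg nA N nC (m+1) = 0" using h N unfolding M2_def by (intro EEg_E) linarith+
    moreover have "epsg nA N nC m = 0" using h N nC nA unfolding M2_def by (intro epsg_0) linarith+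
    ultimately show ?thesis by simp
  qed
qed


lemma e_block:
  assumes j: "j \<ge> 1" and m: "m \<le> blen j + 1"
  shows "ex_e (bstart j + m) = EEg (3^(j^2)) (j^6) (2^(j^2)) m"
proof (cases "m < blen j")
  case True
  have b1: "bstart j \<ge> 1" using bstart_ge[of j] j by simp
  have "blk (bstart j + m) = j" using True bstart_Suc[OF j] j by (intro blk_eq) auto
  thus ?thesis using b1 by (simp add: ex_e_def)
next
  case False
  define k where "k = m - blen j"
  have k1: "k \<le> 1" using m False by (simp add: k_def)
  have n: "bstart j + m = bstart (Suc j) + k" using False bstart_Suc[OF j] by (simp add: k_def)
  have b1: "bstart (Suc j) \<ge> 1" using bstart_ge[of "Suc j"] by simp
  have "blk (bstart (Suc j) + k) = Suc j" using k1 bstart_Suc[of "Suc j"] blen_pos[of "Suc j"]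
    by (intro blk_eq) auto
  hence lhs: "ex_e (bstart j + m) = EEg (3^(Suc j^2)) (Suc j^6) (2^(Suc j^2)) k" using b1 n by (simp add: ex_e_def)
  have "(3::nat)^1 \<le> 3^(Suc j^2)" by (intro power_increasing) auto
  hence "(3::nat)^(Suc j^2) \<ge> 3" by simp
  hence "k < 3^(Suc j^2)" using k1 by linarith
  hence l0: "ex_e (bstart j + m) = 0" using lhs by (simp add: EEg_A)
  have N1: "j^6 \<ge> (1::nat)" using j by simp
  have r0: "EEg (3^(j^2)) (j^6) (2^(j^2)) m = 0"
  proof (cases "m = blen j")
    case True
    have "EEg (3^(j^2)) (j^6) (2^(j^2)) m = 1 - (real m - real (3^(j^2) + (j^6-1) + 2^(j^2)) + 1) / real (j^6)"
      using True N1 by (intro EEg_D) (auto simp: blen_def)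
    also have "\<dots> = 0"
    proof -
      define M2 where "M2 = 3^(j^2) + (j^6-1) + 2^(j^2)"
      have "m = M2 + (j^6 - 1)" using True by (simp add: blen_def M2_def)
      hence "real m = real M2 + real (j^6) - 1" using N1 by (simp add: of_nat_diff)
      thus ?thesis using N1 j unfolding M2_def[symmetric] by simp
    qed
    finally show ?thesis .
  next
    case False
    hence "m = blen j + 1" using m \<open>\<not> m < blen j\<close> by simp
    thus ?thesis using N1 by (intro EEg_E) (auto simp: blen_def)
  qed
  show ?thesis using l0 r0 by simp
qed

definition epsx :: "nat \<Rightarrow> real" where "epsx n = ex_e (n+1) - ex_e n"
definition Fx :: "nat \<Rightarrow> real" where
  "Fx n = (epsx n)^2 + (if epsx (n+1) = epsx n then 0 else \<bar>epsx n\<bar> + \<bar>epsx (n+1)\<bar>)"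
definition Fg :: "nat \<Rightarrow> nat \<Rightarrow> nat \<Rightarrow> nat \<Rightarrow> real" where
  "Fg nA N nC m = (epsg nA N nC m)^2 + (if epsg nA N nC (m+1) = epsg nA N nC m then 0
      else \<bar>epsg nA N nC m\<bar> + \<bar>epsg nA N nC (m+1)\<bar>)"

lemma Fx_nonneg: "Fx n \<ge> 0" by (simp add: Fx_def)

lemma Fx_block:
  assumes j: "j \<ge> 1" and m: "m < blen j"
  shows "Fx (bstart j + m) = Fg (3^(j^2)) (j^6) (2^(j^2)) m"
proof -
  have "(3::nat)^1 \<le> 3^(j^2)" using j by (intro power_increasing) (auto simp: Suc_le_eq)
  hence nA: "(3::nat)^(j^2) \<ge> 2" by simp
  have N: "j^6 \<ge> (1::nat)" using j by simp
  have nC: "(2::nat)^(j^2) \<ge> 1" by simp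
  have e: "\<And>i. i \<le> blen j + 1 \<Longrightarrow> ex_e (bstart j + i) = EEg (3^(j^2)) (j^6) (2^(j^2)) i"
    using e_block[OF j] by simp
  have ep: "\<And>i. i \<le> blen j \<Longrightarrow> epsx (bstart j + i) = epsg (3^(j^2)) (j^6) (2^(j^2)) i"
  proof -
    fix i assume i: "i \<le> blen j"
    have "epsx (bstart j + i) = EEg (3^(j^2)) (j^6) (2^(j^2)) (i+1) - EEg (3^(j^2)) (j^6) (2^(j^2)) i"
      unfolding epsx_def using e[of "i+1"] e[of i] i by (simp add: add.assoc)
    also have "\<dots> = epsg (3^(j^2)) (j^6) (2^(j^2)) i"
      using i nA N nC by (intro eps_formula) (auto simp: blen_def)
    finally show "epsx (bstart j + i) = epsg (3^(j^2)) (j^6) (2^(j^2)) i" .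
  qed
  have "epsx (bstart j + m) = epsg (3^(j^2)) (j^6) (2^(j^2)) m" using ep m by simp
  moreover have "epsx (bstart j + m + 1) = epsg (3^(j^2)) (j^6) (2^(j^2)) (m+1)"
    using ep[of "m+1"] m by (simp add: add.assoc)
  ultimately show ?thesis unfolding Fx_def Fg_def by simp
qed

lemma sum_if_le:
  fixes c :: real
  assumes "finite A" "c \<ge> 0" "finite S"
  shows "(\<Sum>m\<in>S. if m \<in> A then c else 0) \<le> c * card A"
proof -
  have "(\<Sum>m\<in>S. if m \<in> A then c else 0) = (\<Sum>m\<in>S \<inter> A. c)"
    using sum.inter_restrict[OF assms(3), of "\<lambda>_. c" A] by simp
  also have "\<dots> = c * card (S \<inter> A)" by simp
  also have "\<dots> \<le> c * card A" using assms by (intro mult_left_mono) (auto intro: card_mono)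
  finally show ?thesis .
qed

lemma block_sum:
  assumes nA: "nA \<ge> 2" and N: "N \<ge> 1" and nC: "nC \<ge> 1"
  shows "(\<Sum>m<L. Fg nA N nC m) \<le> 10 / real N"
proof -
  define M2 where "M2 = nA + (N-1) + nC"
  define U where "U = {nA - 1..<nA + N - 1} \<union> {M2 - 1..<M2 + N - 1}"
  define Cs where "Cs = {nA - 2, nA + N - 2, M2 - 2, M2 + N - 2}"
  have Nr: "real N \<ge> 1" using N by simp
  have eb: "\<bar>epsg nA N nC m\<bar> \<le> 1 / real N" for m unfolding epsg_def by auto
  have e2: "(epsg nA N nC m)^2 \<le> (if m \<in> U then 1 / real N^2 else 0)" for m
  proof (cases "nA - 1 \<le> m \<and> m < nA + N - 1")
    case True
    hence "m \<in> U" by (auto simp: U_def)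
    thus ?thesis using epsg_1[of nA m N nC] True by (simp add: power_divide)
  next
    case F1: False
    show ?thesis
    proof (cases "M2 - 1 \<le> m \<and> m < M2 + N - 1")
      case True
      hence "m \<in> U" by (auto simp: U_def)
      thus ?thesis using epsg_2[of nA m N nC] True F1 unfolding M2_def by (simp add: power_divide)
    next
      case False
      thus ?thesis using epsg_0[of nA m N nC] F1 unfolding M2_def by simp
    qed
  qed
  have cor: "(if epsg nA N nC (m+1) = epsg nA N nC m then 0 else \<bar>epsg nA N nC m\<bar> + \<bar>epsg nA N nC (m+1)\<bar>)
      \<le> (if m \<in> Cs then 2 / real N else 0)" for m
  proof (cases "m \<in> Cs")
    case True
    thus ?thesis using eb[of m] eb[of "m+1"] by auto
  next
    case False
    hence m: "m \<noteq> nA - 2" "m \<noteq> nA + N - 2" "m \<noteq> M2 - 2" "m \<noteq> M2 + N - 2" by (auto simp: Cs_def)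
    obtain k where k: "nA = k + 2" using nA by (metis add.commute le_add_diff_inverse)
    obtain N' where N': "N = N' + 1" using N by (metis add.commute le_add_diff_inverse)
    have M2e: "M2 = k + N' + nC + 2" unfolding M2_def k N' by simp
    have mm: "m \<noteq> k" "m \<noteq> k + N' + 1" "m \<noteq> k + N' + nC" "m \<noteq> k + N' + nC + N' + 1"
      using m unfolding k N' M2e by simp_all
    have q1: "(nA - 1 \<le> m+1) = (nA - 1 \<le> m)" using mm unfolding k by auto
    have q2: "(m+1 < nA + N - 1) = (m < nA + N - 1)" using mm unfolding k N' by auto
    have q3: "(M2 - 1 \<le> m+1) = (M2 - 1 \<le> m)" using mm unfolding M2e by auto
    have q4: "(m+1 < M2 + N - 1) = (m < M2 + N - 1)" using mm unfolding M2e N' by auto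
    have p1: "(nA - 1 \<le> m+1 \<and> m+1 < nA + N - 1) = (nA - 1 \<le> m \<and> m < nA + N - 1)" using q1 q2 by simp
    have p2: "(M2 - 1 \<le> m+1 \<and> m+1 < M2 + N - 1) = (M2 - 1 \<le> m \<and> m < M2 + N - 1)" using q3 q4 by simp
    have "epsg nA N nC (m+1) = epsg nA N nC m" unfolding epsg_def M2_def[symmetric] p1 p2 ..
    thus ?thesis using False by simp
  qed
  have "(\<Sum>m<L. Fg nA N nC m) \<le> (\<Sum>m<L. (if m \<in> U then 1 / real N^2 else 0) + (if m \<in> Cs then 2 / real N else 0))"
    unfolding Fg_def using e2 cor by (intro sum_mono add_mono) auto
  also have "\<dots> = (\<Sum>m<L. (if m \<in> U then 1 / real N^2 else 0)) + (\<Sum>m<L. (if m \<in> Cs then 2 / real N else 0))"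
    by (rule sum.distrib)
  also have "\<dots> \<le> (1 / real N^2) * card U + (2 / real N) * card Cs"
    by (intro add_mono sum_if_le) (auto simp: U_def Cs_def)
  also have "\<dots> \<le> (1 / real N^2) * (2 * real N) + (2 / real N) * 4"
  proof -
    have c1: "card {nA - 1..<nA + N - 1} = N" using nA N by simp
    have c2: "card {M2 - 1..<M2 + N - 1} = N" using nA N unfolding M2_def by simp
    have "card U \<le> N + N" unfolding U_def using card_Un_le[of "{nA - 1..<nA + N - 1}" "{M2 - 1..<M2 + N - 1}"] c1 c2
      by simp
    hence "real (card U) \<le> 2 * real N" by linarith
    moreover have "card Cs \<le> 4"
    proof -
      have "Cs = set [nA - 2, nA + N - 2, M2 - 2, M2 + N - 2]" by (simp add: Cs_def)
      thus ?thesis using card_length[of "[nA - 2, nA + N - 2, M2 - 2, M2 + N - 2]"] by simp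
    qed
    hence "real (card Cs) \<le> 4" by linarith
    ultimately show ?thesis using Nr by (intro add_mono mult_left_mono) auto
  qed
  also have "\<dots> = 10 / real N" using Nr by (simp add: field_simps power2_eq_square)
  finally show ?thesis .
qed



lemma sum_split_nat: "(\<Sum>n<(a::nat)+b. f n) = (\<Sum>n<a. f n) + (\<Sum>m<b. f (a+m))"
  by (induction b) (simp_all add: add.assoc)

lemma Fx_partial:
  assumes "J \<ge> 1"
  shows "(\<Sum>n<bstart J. Fx n) \<le> Fx 0 + 10 * (\<Sum>j<J. inverse (real j ^ 6))"
  using assms
proof (induction J rule: dec_induct)
  case base thus ?case by (simp add: bstart_def)
next
  case (step J)
  have J: "J \<ge> 1" using step by simp
  have "(\<Sum>n<bstart (Suc J). Fx n) = (\<Sum>n<bstart J. Fx n) + (\<Sum>m<blen J. Fx (bstart J + m))"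
    using bstart_Suc[OF J] by (simp add: sum_split_nat)
  also have "(\<Sum>m<blen J. Fx (bstart J + m)) = (\<Sum>m<blen J. Fg (3^(J^2)) (J^6) (2^(J^2)) m)"
    using Fx_block[OF J] by (intro sum.cong) auto
  also have "\<dots> \<le> 10 / real (J^6)"
  proof (rule block_sum)
    have "(3::nat)^1 \<le> 3^(J^2)" using J by (intro power_increasing) (auto simp: Suc_le_eq)
    thus "3^(J^2) \<ge> (2::nat)" by simp
    show "J^6 \<ge> (1::nat)" using J by simp
    show "(2::nat)^(J^2) \<ge> 1" by simp
  qed
  also have "10 / real (J^6) = 10 * inverse (real J ^ 6)" by (simp add: divide_inverse)
  finally show ?case using step.IH by (simp add: algebra_simps)
qed

lemma Fx_summable: "summable Fx"
proof -
  define S6 where "S6 = suminf (\<lambda>j. inverse (real j ^ 6))"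
  have s6: "summable (\<lambda>j. inverse (real j ^ 6) :: real)" by (rule inverse_power_summable) simp
  show ?thesis
  proof (rule bounded_imp_summable)
    show "\<And>n. Fx n \<ge> 0" by (rule Fx_nonneg)
    fix n
    have "(\<Sum>k\<le>n. Fx k) = (\<Sum>k<Suc n. Fx k)" by (simp add: lessThan_Suc_atMost)
    also have "\<dots> \<le> (\<Sum>k<bstart (Suc n). Fx k)"
      using bstart_ge[of "Suc n"] Fx_nonneg by (intro sum_mono2) auto
    also have "\<dots> \<le> Fx 0 + 10 * (\<Sum>j<Suc n. inverse (real j ^ 6))" by (rule Fx_partial) simp
    also have "(\<Sum>j<Suc n. inverse (real j ^ 6)) \<le> S6"
      unfolding S6_def using s6 by (intro sum_le_suminf) auto
    finally show "(\<Sum>k\<le>n. Fx k) \<le> Fx 0 + 10 * S6" by simp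
  qed
qed


lemma exp_lip:
  fixes s t :: real assumes "s \<ge> 0" "t \<ge> 0"
  shows "\<bar>exp (-s) - exp (-t)\<bar> \<le> \<bar>s - t\<bar>"
proof -
  have key: "exp (-s) - exp (-t) \<le> t - s" if "0 \<le> s" "s \<le> t" for s t :: real
  proof -
    have ee: "exp (-s) * exp (s - t) = exp (-t)" by (simp add: exp_add[symmetric])
    have "exp (-s) - exp (-t) = exp (-s) * (1 - exp (s - t))" by (simp add: right_diff_distrib ee)
    also have "\<dots> \<le> 1 * (t - s)"
    proof (rule mult_mono)
      show "exp (-s) \<le> 1" using that by simp
      show "1 - exp (s - t) \<le> t - s" using exp_ge_add_one_self[of "s - t"] by linarith
      show "0 \<le> 1 - exp (s - t)" using that by simp
    qed simp
    finally show ?thesis by simp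
  qed
  show ?thesis
  proof (cases "s \<le> t")
    case True
    have "exp (-t) \<le> exp (-s)" using True by simp
    thus ?thesis using key[OF assms(1) True] True by (simp add: abs_le_iff)
  next
    case False
    have "exp (-s) \<le> exp (-t)" using False by simp
    thus ?thesis using key[OF assms(2)] False by (simp add: abs_le_iff)
  qed
qed

lemma ln2_props: "0 < ln (2::real)" "ln (2::real) < 1" using ln_2_less_1 by auto

lemma exp_lin2: "exp (- (2 * ln 2)) = (1/4 :: real)"
proof -
  have "ln (2*2::real) = ln 2 + ln 2" using ln_mult[of "2::real" 2] by simp
  hence "2 * ln (2::real) = ln 4" by simp
  hence "exp (- (2 * ln 2)) = exp (- ln (4::real))" by simp
  also have "\<dots> = 1/4" by (simp add: exp_minus inverse_eq_divide)
  finally show ?thesis .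
qed

lemma a_range: "1/2 \<le> ex_a n \<and> ex_a n \<le> 1"
proof -
  have e: "0 \<le> ex_e n" "ex_e n \<le> 1" using ex_e_range by auto
  have "ln 2 * ex_e n \<le> ln 2 * 1" using e ln2_props by (intro mult_left_mono) auto
  hence "exp (- ln 2) \<le> exp (- ln 2 * ex_e n)" by simp
  moreover have "exp (- ln 2) = (1/2::real)" by (simp add: exp_minus)
  moreover have "exp (- ln 2 * ex_e n) \<le> 1" using e ln2_props by simp
  ultimately show ?thesis by (simp add: ex_a_exp)
qed

lemma h_bound: "\<bar>ex_a (n+1) - ex_a n\<bar> \<le> \<bar>epsx n\<bar>"
proof -
  have e: "\<And>k. 0 \<le> ex_e k" using ex_e_range by auto
  have "\<bar>ex_a (n+1) - ex_a n\<bar> = \<bar>exp (-(ln 2 * ex_e (n+1))) - exp (-(ln 2 * ex_e n))\<bar>" by (simp add: ex_a_exp)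
  also have "\<dots> \<le> \<bar>ln 2 * ex_e (n+1) - ln 2 * ex_e n\<bar>" using e ln2_props by (intro exp_lip) auto
  also have "\<dots> = ln 2 * \<bar>epsx n\<bar>" using ln2_props by (simp add: epsx_def abs_mult right_diff_distrib[symmetric])
  also have "\<dots> \<le> 1 * \<bar>epsx n\<bar>" using ln2_props by (intro mult_right_mono) auto
  finally show ?thesis by simp
qed

lemma bsq: "ex_a n ^ 2 = exp (- (2 * ln 2) * ex_e n)"
  by (simp add: ex_a_exp power2_eq_square exp_add[symmetric])

lemma b_lip: "\<bar>ex_a (n+1)^2 - ex_a n^2\<bar> \<le> 2 * \<bar>epsx n\<bar>"
proof -
  have e: "\<And>k. 0 \<le> ex_e k" using ex_e_range by auto
  have "\<bar>ex_a (n+1)^2 - ex_a n^2\<bar> = \<bar>exp (-((2*ln 2) * ex_e (n+1))) - exp (-((2*ln 2) * ex_e n))\<bar>" by (simp add: bsq)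
  also have "\<dots> \<le> \<bar>(2*ln 2) * ex_e (n+1) - (2*ln 2) * ex_e n\<bar>" using e ln2_props by (intro exp_lip) auto
  also have "\<dots> = (2*ln 2) * \<bar>epsx n\<bar>" using ln2_props by (simp add: epsx_def abs_mult right_diff_distrib[symmetric])
  also have "\<dots> \<le> 2 * \<bar>epsx n\<bar>" using ln2_props by (intro mult_right_mono) auto
  finally show ?thesis by simp
qed

lemma b_second:
  assumes eq: "epsx (n+1) = epsx n"
  shows "\<bar>(ex_a (n+1)^2 - ex_a n^2) - (ex_a (n+2)^2 - ex_a (n+1)^2)\<bar> \<le> 16 * (epsx n)^2"
proof -
  define b0 where "b0 = ex_a n ^2"
  define b1 where "b1 = ex_a (n+1) ^2"
  define b2 where "b2 = ex_a (n+2) ^2"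
  have "ex_e (n+2) + ex_e n = 2 * ex_e (n+1)" using eq by (simp add: epsx_def algebra_simps numeral_2_eq_2)
  hence se: "-(2*ln 2) * ex_e (n+2) + -(2*ln 2) * ex_e n = -(2*ln 2) * ex_e (n+1) + -(2*ln 2) * ex_e (n+1)"
  proof -
    assume h: "ex_e (n+2) + ex_e n = 2 * ex_e (n+1)"
    have "-(2*ln 2) * ex_e (n+2) + -(2*ln 2) * ex_e n = -(2*ln 2) * (ex_e (n+2) + ex_e n)" by (simp add: algebra_simps)
    also have "\<dots> = -(2*ln 2) * (2 * ex_e (n+1))" using h by simp
    also have "\<dots> = -(2*ln 2) * ex_e (n+1) + -(2*ln 2) * ex_e (n+1)" by (simp add: algebra_simps)
    finally show ?thesis .
  qed
  have "b2 * b0 = exp (-(2*ln 2) * ex_e (n+2) + -(2*ln 2) * ex_e n)" unfolding b0_def b2_def bsq by (rule exp_add[symmetric])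
  also have "\<dots> = exp (-(2*ln 2) * ex_e (n+1) + -(2*ln 2) * ex_e (n+1))" by (simp only: se)
  also have "\<dots> = exp (-(2*ln 2) * ex_e (n+1)) * exp (-(2*ln 2) * ex_e (n+1))" by (rule exp_add)
  also have "\<dots> = b1^2" unfolding b1_def bsq by (simp add: power2_eq_square)
  finally have "b2 * b0 = b1^2" .
  moreover have b0p: "b0 \<ge> 1/4"
  proof -
    have "(2*ln 2) * ex_e n \<le> (2*ln 2) * 1" using ex_e_range[of n] ln2_props by (intro mult_left_mono) auto
    hence "exp (- (2 * ln 2)) \<le> exp (- (2 * ln 2) * ex_e n)" by simp
    thus ?thesis unfolding b0_def bsq exp_lin2 .
  qed
  ultimately have "b2 = b1^2 / b0" by (simp add: field_simps)
  hence "(b1 - b0) - (b2 - b1) = -((b1 - b0)^2 / b0)" using b0p by (simp add: field_simps power2_eq_square)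
  hence "\<bar>(b1 - b0) - (b2 - b1)\<bar> = (b1 - b0)^2 / b0" using b0p by simp
  also have "\<dots> \<le> (2 * \<bar>epsx n\<bar>)^2 / (1/4)"
  proof (rule frac_le)
    have "\<bar>b1 - b0\<bar> \<le> 2 * \<bar>epsx n\<bar>" using b_lip[of n] by (simp add: b0_def b1_def)
    hence "\<bar>b1 - b0\<bar>^2 \<le> (2 * \<bar>epsx n\<bar>)^2" by (intro power_mono) auto
    thus "(b1 - b0)^2 \<le> (2 * \<bar>epsx n\<bar>)^2" by simp
  qed (use b0p in auto)
  also have "\<dots> = 16 * (epsx n)^2" by (simp add: power2_eq_square)
  finally show ?thesis by (simp add: b0_def b1_def b2_def)
qed

lemma lin_comb:
  fixes A B C x z F G :: real
  assumes "A \<le> x" "B \<le> x/2 + z/2" "C \<le> 16*F" "x \<le> F" "z \<le> G" "0 \<le> G" "0 \<le> F"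
  shows "A + B + C \<le> 18*F + G"
  using assms by linarith

lemma q_bound:
  "(ex_a (n+1) - ex_a n)^2 + \<bar>ex_a (n+1) - ex_a n\<bar>*\<bar>ex_a (n+2) - ex_a (n+1)\<bar>
     + \<bar>(ex_a (n+1)^2 - ex_a n^2) - (ex_a (n+2)^2 - ex_a (n+1)^2)\<bar> \<le> 18 * Fx n + Fx (n+1)"
proof -
  define e0 where "e0 = epsx n"
  define e1 where "e1 = epsx (n+1)"
  have F0: "Fx n = e0^2 + (if e1 = e0 then 0 else \<bar>e0\<bar> + \<bar>e1\<bar>)" by (simp add: Fx_def e0_def e1_def)
  have F1: "Fx (n+1) \<ge> e1^2" by (simp add: Fx_def e1_def)
  have hb0: "\<bar>ex_a (n+1) - ex_a n\<bar> \<le> \<bar>e0\<bar>" using h_bound[of n] by (simp add: e0_def)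
  have n2: "n + 2 = (n+1) + 1" by simp
  have hb1: "\<bar>ex_a (n+2) - ex_a (n+1)\<bar> \<le> \<bar>e1\<bar>" unfolding n2 e1_def by (rule h_bound)
  have t1: "(ex_a (n+1) - ex_a n)^2 \<le> e0^2"
  proof -
    have "\<bar>ex_a (n+1) - ex_a n\<bar>^2 \<le> \<bar>e0\<bar>^2" using hb0 by (intro power_mono) auto
    thus ?thesis by simp
  qed
  have t2: "\<bar>ex_a (n+1) - ex_a n\<bar>*\<bar>ex_a (n+2) - ex_a (n+1)\<bar> \<le> e0^2/2 + e1^2/2"
  proof -
    have "\<bar>ex_a (n+1) - ex_a n\<bar>*\<bar>ex_a (n+2) - ex_a (n+1)\<bar> \<le> \<bar>e0\<bar>*\<bar>e1\<bar>" using hb0 hb1 by (intro mult_mono) auto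
    moreover have "\<bar>e0\<bar>*\<bar>e1\<bar> \<le> e0^2/2 + e1^2/2" using sum_squares_ge_zero[of "\<bar>e0\<bar> - \<bar>e1\<bar>" 0]
      by (simp add: power2_eq_square algebra_simps abs_mult_self)
    ultimately show ?thesis by linarith
  qed
  have t3: "\<bar>(ex_a (n+1)^2 - ex_a n^2) - (ex_a (n+2)^2 - ex_a (n+1)^2)\<bar> \<le> 16 * Fx n"
  proof (cases "e1 = e0")
    case True
    hence "\<bar>(ex_a (n+1)^2 - ex_a n^2) - (ex_a (n+2)^2 - ex_a (n+1)^2)\<bar> \<le> 16 * e0^2"
      using b_second[of n] by (simp add: e0_def e1_def)
    thus ?thesis using F0 True by simp
  next
    case False
    have "\<bar>(ex_a (n+1)^2 - ex_a n^2) - (ex_a (n+2)^2 - ex_a (n+1)^2)\<bar> \<le> \<bar>ex_a (n+1)^2 - ex_a n^2\<bar> + \<bar>ex_a (n+2)^2 - ex_a (n+1)^2\<bar>"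
      by (rule abs_triangle_ineq4)
    also have "\<dots> \<le> 2*\<bar>e0\<bar> + 2*\<bar>e1\<bar>" using b_lip[of n] b_lip[of "n+1"] unfolding e0_def e1_def n2 by (rule add_mono)
    also have "\<dots> \<le> 16 * Fx n"
    proof -
      have "Fx n = e0^2 + (\<bar>e0\<bar> + \<bar>e1\<bar>)" using F0 False by simp
      moreover have "e0^2 \<ge> 0" by simp
      ultimately show ?thesis by (simp add: algebra_simps)
    qed
    finally show ?thesis .
  qed
  have Fe: "e0^2 \<le> Fx n" using F0 by simp
  have F1n: "Fx (n+1) \<ge> 0" "Fx n \<ge> 0" using Fx_nonneg by auto
  show ?thesis by (rule lin_comb[OF t1 t2 t3 Fe F1 F1n(1) F1n(2)])
qed

definition qex :: "nat \<Rightarrow> real" where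
  "qex n = (ex_a (n+1) - ex_a n)^2 + \<bar>ex_a (n+1) - ex_a n\<bar>*\<bar>ex_a (n+2) - ex_a (n+1)\<bar>
     + \<bar>(ex_a (n+1)^2 - ex_a n^2) - (ex_a (n+2)^2 - ex_a (n+1)^2)\<bar>"

lemma q_summable: "summable qex"
proof (rule summable_comparison_test')
  have "summable (\<lambda>n. Fx (Suc n))" using Fx_summable by (simp only: summable_Suc_iff)
  hence "summable (\<lambda>n. Fx (n+1))" by simp
  thus "summable (\<lambda>n. 18 * Fx n + Fx (n+1))" using Fx_summable by (intro summable_add summable_mult)
next
  fix n :: nat
  have "qex n \<ge> 0" unfolding qex_def by simp
  hence "norm (qex n) = qex n" by simp
  also have "\<dots> \<le> 18 * Fx n + Fx (n+1)" unfolding qex_def by (rule q_bound)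
  finally show "norm (qex n) \<le> 18 * Fx n + Fx (n+1)" .
qed

lemma h_tendsto: "(\<lambda>n. ex_a (n+1) - ex_a n) \<longlonglongrightarrow> 0"
proof (rule Lim_null_comparison)
  show "\<forall>\<^sub>F n in sequentially. norm (ex_a (n+1) - ex_a n) \<le> sqrt (Fx n)"
  proof (intro always_eventually allI)
    fix n
    have "epsx n ^2 \<le> Fx n" by (simp add: Fx_def)
    hence "sqrt (epsx n ^2) \<le> sqrt (Fx n)" by (rule real_sqrt_le_mono)
    thus "norm (ex_a (n+1) - ex_a n) \<le> sqrt (Fx n)" using h_bound[of n] by simp
  qed
  show "(\<lambda>n. sqrt (Fx n)) \<longlonglongrightarrow> 0"
    using tendsto_real_sqrt[OF summable_LIMSEQ_zero[OF Fx_summable]] by simp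
qed


theorem theorem5p3:
  fixes K :: "real set"
  assumes "compact K" and "K \<subseteq> {-1<..<1}"
  shows "\<exists>C. \<forall>x\<in>K. \<forall>\<theta>. \<forall>n. \<bar>ex_u x \<theta> n\<bar> \<le> C"
proof (cases "K = {}")
  case True thus ?thesis by auto
next
  case False
  have "compact (abs ` K)" using assms(1) by (intro compact_continuous_image continuous_intros)
  then obtain r where r: "r \<in> abs ` K" "\<And>t. t \<in> abs ` K \<Longrightarrow> t \<le> r"
    using compact_attains_sup[of "abs ` K"] False by blast
  then obtain x0 where x0: "x0 \<in> K" "r = \<bar>x0\<bar>" by blast
  have r0: "0 \<le> r" using x0 by simp
  have "x0 \<in> {-1<..<1}" using x0 assms(2) by auto
  hence r1: "r < 1" using x0 by (simp add: abs_less_iff)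
  have xr: "\<And>x. x \<in> K \<Longrightarrow> \<bar>x\<bar> \<le> r" using r(2) by blast
  have qs: "summable (\<lambda>n. (ex_a (n+1) - ex_a n)^2 + \<bar>ex_a (n+1) - ex_a n\<bar>*\<bar>ex_a (n+2) - ex_a (n+1)\<bar>
                 + \<bar>(ex_a (n+1)^2 - ex_a n^2) - (ex_a (n+2)^2 - ex_a (n+1)^2)\<bar>)"
    using q_summable unfolding qex_def .
  obtain C where C: "\<forall>x u. \<bar>x\<bar> \<le> r \<longrightarrow> (\<forall>n. ex_a (n+1) * u (n+2) = x * u (n+1) - ex_a n * u n)
            \<longrightarrow> (u 0)^2 + (u 1)^2 = 1 \<longrightarrow> (\<forall>n. \<bar>u n\<bar> \<le> C)"
    using general_bound[OF r0 r1 a_range qs h_tendsto] by blast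
  show ?thesis
  proof (intro exI ballI allI)
    fix x \<theta> n assume x: "x \<in> K"
    have rec: "\<forall>n. ex_a (n+1) * ex_u x \<theta> (n+2) = x * ex_u x \<theta> (n+1) - ex_a n * ex_u x \<theta> n"
    proof
      fix n
      have "ex_a (n+1) \<noteq> 0" using a_range[of "n+1"] by auto
      thus "ex_a (n+1) * ex_u x \<theta> (n+2) = x * ex_u x \<theta> (n+1) - ex_a n * ex_u x \<theta> n"
        by (simp add: numeral_2_eq_2)
    qed
    have init: "(ex_u x \<theta> 0)^2 + (ex_u x \<theta> 1)^2 = 1" by simp
    show "\<bar>ex_u x \<theta> n\<bar> \<le> C" using C xr[OF x] rec init by blast
  qed
qed

end
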